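(* Let $C=\{c_1,\dots,c_m\}$ with axis $c_1\lhd\dots\lhd c_m$, and for $1\le i\le j\le m$ let $f(i,j)$ be the probability that, in a vote sampled from the Conitzer distribution for this axis, the candidates $c_i,\dots,c_j$ occupy the top $j-i+1$ positions. Then $f(\ell,\ell)=1/m$ for all $\ell\in[m]$ and $f(1,m)=1$; moreover, for all integers $i,j$ with $1<i\le j<m$: $f(i,j)=1/m$, $f(1,i)=(i+1)/(2m)$, and $f(j,m)=(m-j+2)/(2m)$.
   Context: A vote over $C$ is a total order on $C$ (position 1 is the top). The Conitzer (random peak) distribution for the axis $c_1\lhd\dots\lhd c_m$ generates a vote as follows: pick a candidate uniformly at random and rank it first; then in each of $m-1$ iterations, the already selected candidates form an interval $\{c_a,\dots,c_b\}$ of the axis, and one chooses uniformly at random among the candidates $c_{a-1}$ and $c_{b+1}$ that exist (if only one exists it is chosen with probability 1) and places it in the highest still-available position. *)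

theory Defs
  imports "HOL-Probability.Probability"
begin

text \<open>Candidates c_1,...,c_m are represented by their axis indices 1,...,m.
A vote is the list of candidates from position 1 (top) downwards.\<close>

text \<open>Extension step: the already selected candidates form the interval {a..b};
n further iterations remain. Returns the list of subsequently placed candidates.\<close>
fun conitzer_ext :: "nat \<Rightarrow> nat \<Rightarrow> nat \<Rightarrow> nat \<Rightarrow> nat list pmf" where
  "conitzer_ext m a b 0 = return_pmf []"
| "conitzer_ext m a b (Suc n) =
     (if 1 < a \<and> b < m then
        bind_pmf (pmf_of_set {a - 1, b + 1})
          (\<lambda>c. map_pmf (Cons c) (conitzer_ext m (min a c) (max b c) n))
      else if 1 < a then map_pmf (Cons (a - 1)) (conitzer_ext m (a - 1) b n)
      else if b < m then map_pmf (Cons (b + 1)) (conitzer_ext m a (b + 1) n)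
      else return_pmf [])"

definition conitzer :: "nat \<Rightarrow> nat list pmf" where
  "conitzer m = bind_pmf (pmf_of_set {1..m})
     (\<lambda>c. map_pmf (Cons c) (conitzer_ext m c c (m - 1)))"

definition top_interval_prob :: "nat \<Rightarrow> nat \<Rightarrow> nat \<Rightarrow> real" where
  "top_interval_prob m i j =
     measure_pmf.prob (conitzer m) {v. set (take (j - i + 1) v) = {i..j}}"

end

theory Submission
  imports Defs
begin

lemma prob_bind_pmf_of_set:
  assumes "finite S" "S \<noteq> {}"
  shows "measure_pmf.prob (bind_pmf (pmf_of_set S) f) A = (\<Sum>x\<in>S. measure_pmf.prob (f x) A) / card S"
proof -
  have "emeasure (measure_pmf (bind_pmf (pmf_of_set S) f)) A = (\<Sum>x\<in>S. emeasure (measure_pmf (f x)) A) / card S"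
    using assms by (simp add: nn_integral_pmf_of_set)
  also have "\<dots> = ennreal (\<Sum>x\<in>S. measure_pmf.prob (f x) A) / ennreal (card S)"
    using assms by (simp add: measure_pmf.emeasure_eq_measure sum_ennreal ennreal_of_nat_eq_real_of_nat)
  also have "\<dots> = ennreal ((\<Sum>x\<in>S. measure_pmf.prob (f x) A) / card S)"
    using assms by (subst divide_ennreal) (auto simp: sum_nonneg card_gt_0_iff)
  finally show ?thesis
    by (subst (asm) measure_pmf.emeasure_eq_measure, subst (asm) ennreal_inj) (auto simp: sum_nonneg)
qed

definition P :: "nat \<Rightarrow> nat \<Rightarrow> nat \<Rightarrow> nat \<Rightarrow> nat \<Rightarrow> nat set \<Rightarrow> real" where
  "P m a b n k S = measure_pmf.prob (conitzer_ext m a b n) {w. {a..b} \<union> set (take k w) = S}"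

lemma P_zero:
  assumes "a \<le> b" "a \<notin> S \<or> b \<notin> S"
  shows "P m a b n k S = 0"
proof -
  have "{w. {a..b} \<union> set (take k w) = S} = {}" using assms by auto
  then show ?thesis by (simp add: P_def)
qed

lemma P_base: "P m a b n 0 S = (if {a..b} = S then 1 else 0)"
  by (simp add: P_def)

lemma P_rec:
  assumes "a \<le> b"
  shows "P m a b (Suc n) (Suc k) S = (if 1<a \<and> b<m then (P m (a-1) b n k S + P m a (b+1) n k S)/2
     else if 1<a then P m (a-1) b n k S else if b<m then P m a (b+1) n k S
     else (if {a..b} = S then 1 else 0))"
proof -
  have L: "Cons (a-1) -` {w. {a..b} \<union> set (take (Suc k) w) = S} = {w. {a-1..b} \<union> set (take k w) = S}"
    if "1 < a"
  proof -
    have "{a-1..b} = insert (a-1) {a..b}" using that assms Icc_eq_insert_lb_nat[of "a-1" b] by simp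
    then show ?thesis by (simp add: Un_insert_right Un_insert_left)
  qed
  have R: "Cons (b+1) -` {w. {a..b} \<union> set (take (Suc k) w) = S} = {w. {a..b+1} \<union> set (take k w) = S}"
  proof -
    have "{a..b+1} = insert (b+1) {a..b}" using assms by auto
    then show ?thesis by (simp add: Un_insert_right Un_insert_left)
  qed
  have ne: "a - 1 \<noteq> b + 1" using assms by linarith
  show ?thesis
  proof (cases "1<a \<and> b<m")
    case True
    have mn: "min a (a-1) = a-1" "max b (a-1) = b" "min a (b+1) = a" "max b (b+1) = b+1" using assms True by auto
    define E where "E = {w. {a..b} \<union> set (take (Suc k) w) = S}"
    have "conitzer_ext m a b (Suc n) = bind_pmf (pmf_of_set {a-1,b+1}) (\<lambda>c. map_pmf (Cons c) (conitzer_ext m (min a c) (max b c) n))" using True by simp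
    then have "P m a b (Suc n) (Suc k) S = (\<Sum>c\<in>{a-1,b+1}. measure_pmf.prob (map_pmf (Cons c) (conitzer_ext m (min a c) (max b c) n)) E) / 2"
      using ne by (simp add: P_def E_def prob_bind_pmf_of_set)
    also have "\<dots> = (measure_pmf.prob (map_pmf (Cons (a-1)) (conitzer_ext m (a-1) b n)) E + measure_pmf.prob (map_pmf (Cons (b+1)) (conitzer_ext m a (b+1) n)) E) / 2"
      using ne mn by simp
    also have "\<dots> = (P m (a-1) b n k S + P m a (b+1) n k S)/2"
      unfolding measure_map_pmf E_def L[OF conjunct1[OF True]] R P_def ..
    finally show ?thesis using True by simp
  next
    case False
    show ?thesis
    proof (cases "1 < a")
      case True
      then have "conitzer_ext m a b (Suc n) = map_pmf (Cons (a - 1)) (conitzer_ext m (a - 1) b n)" using False by simp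
      then show ?thesis using True False unfolding P_def by (simp only: measure_map_pmf L) simp
    next
      case F2: False
      show ?thesis
      proof (cases "b < m")
        case True
        then have "conitzer_ext m a b (Suc n) = map_pmf (Cons (b + 1)) (conitzer_ext m a (b + 1) n)" using F2 by simp
        then show ?thesis using True F2 unfolding P_def by (simp only: measure_map_pmf R) simp
      next
        case False
        then show ?thesis using F2 by (simp add: P_def)
      qed
    qed
  qed
qed

lemma P_A:
  assumes "1 < i" "j < m"
  shows "i \<le> a \<Longrightarrow> a \<le> b \<Longrightarrow> b \<le> j \<Longrightarrow> k = (a-i)+(j-b) \<Longrightarrow> k \<le> n
    \<Longrightarrow> P m a b n k {i..j} = real (k choose (a-i)) / 2^k"
proof (induction k arbitrary: a b n)
  case 0
  then show ?case by (simp add: P_base)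
next
  case (Suc k)
  obtain n' where n: "n = Suc n'" using Suc.prems by (cases n) auto
  have int: "1 < a \<and> b < m" using Suc.prems assms by auto
  have left: "P m (a-1) b n' k {i..j} = (if a = i then 0 else real (k choose (a-1-i))/2^k)"
  proof (cases "a = i")
    case True then show ?thesis using Suc.prems assms by (auto intro!: P_zero)
  next
    case False then show ?thesis using Suc.prems n by (simp add: Suc.IH)
  qed
  have right: "P m a (b+1) n' k {i..j} = (if b = j then 0 else real (k choose (a-i))/2^k)"
  proof (cases "b = j")
    case True then show ?thesis using Suc.prems assms by (auto intro!: P_zero)
  next
    case False then show ?thesis using Suc.prems n by (simp add: Suc.IH)
  qed
  have "P m a b n (Suc k) {i..j} = (P m (a-1) b n' k {i..j} + P m a (b+1) n' k {i..j})/2"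
    using P_rec[of a b m n' k "{i..j}"] Suc.prems int n by simp
  also have "\<dots> = real (Suc k choose (a-i)) / 2^Suc k"
  proof (cases "a = i")
    case True
    then have "b \<noteq> j" using Suc.prems by auto
    then show ?thesis using True left right by simp
  next
    case False
    then obtain l where l: "a - i = Suc l" "a - 1 - i = l" using Suc.prems by (metis Suc_diff_Suc diff_Suc_1 diff_commute le_neq_implies_less)
    show ?thesis
    proof (cases "b = j")
      case True
      then have "k = l" using Suc.prems l by simp
      then show ?thesis using True False left right l by simp
    next
      case F2: False
      then show ?thesis using False left right l by (simp add: add_divide_distrib)
    qed
  qed
  finally show ?case .
qed


fun T :: "nat \<Rightarrow> nat \<Rightarrow> real" where
  "T 0 r = 1"
| "T (Suc l) 0 = T l 0 / 2"
| "T (Suc l) (Suc r) = (T l (Suc r) + T (Suc l) r) / 2"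

lemma P_B:
  assumes "j < m"
  shows "1 \<le> a \<Longrightarrow> a \<le> b \<Longrightarrow> b \<le> j \<Longrightarrow> k = (a-1)+(j-b) \<Longrightarrow> k \<le> n
    \<Longrightarrow> P m a b n k {1..j} = T (a-1) (j-b)"
proof (induction k arbitrary: a b n)
  case 0
  then show ?case by (simp add: P_base)
next
  case (Suc k)
  obtain n' where n: "n = Suc n'" using Suc.prems by (cases n) auto
  have bm: "b < m" using Suc.prems assms by auto
  show ?case
  proof (cases "a = 1")
    case True
    then have "b < j" using Suc.prems by auto
    have "P m a b n (Suc k) {1..j} = P m a (b+1) n' k {1..j}"
      using P_rec[of a b m n' k "{1..j}"] Suc.prems True bm n by simp
    also have "\<dots> = T (a-1) (j-(b+1))" by (rule Suc.IH) (use Suc.prems n True \<open>b < j\<close> in auto)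
    also have "\<dots> = T (a-1) (j-b)" using True by simp
    finally show ?thesis .
  next
    case False
    then have a1: "1 < a" using Suc.prems by auto
    then obtain l where l: "a - 1 = Suc l" by (cases "a - 1") auto
    have "P m (a-1) b n' k {1..j} = T (a-1-1) (j-b)"
      by (rule Suc.IH) (use Suc.prems n a1 in auto)
    moreover have "a-1-1 = l" using l by arith
    ultimately have left: "P m (a-1) b n' k {1..j} = T l (j-b)" by simp
    have right: "P m a (b+1) n' k {1..j} = (if b = j then 0 else T (Suc l) (j-b-1))"
    proof (cases "b = j")
      case True then show ?thesis using Suc.prems by (auto intro!: P_zero)
    next
      case False
      have "P m a (b+1) n' k {1..j} = T (a-1) (j-(b+1))"
        by (rule Suc.IH) (use Suc.prems n a1 False in auto)
      then show ?thesis using False l by simp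
    qed
    have "P m a b n (Suc k) {1..j} = (P m (a-1) b n' k {1..j} + P m a (b+1) n' k {1..j})/2"
      using P_rec[of a b m n' k "{1..j}"] Suc.prems a1 bm n by simp
    also have "\<dots> = T (a-1) (j-b)"
    proof (cases "b = j")
      case True then show ?thesis using left right l by simp
    next
      case False
      then obtain r where r: "j - b = Suc r" using Suc.prems by (cases "j - b") auto
      then show ?thesis using left right l False by simp
    qed
    finally show ?thesis .
  qed
qed

lemma P_C:
  assumes "1 < i"
  shows "i \<le> a \<Longrightarrow> a \<le> b \<Longrightarrow> b \<le> m \<Longrightarrow> k = (a-i)+(m-b) \<Longrightarrow> k \<le> n
    \<Longrightarrow> P m a b n k {i..m} = T (m-b) (a-i)"
proof (induction k arbitrary: a b n)
  case 0
  then show ?case by (simp add: P_base)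
next
  case (Suc k)
  obtain n' where n: "n = Suc n'" using Suc.prems by (cases n) auto
  have a1: "1 < a" using Suc.prems assms by auto
  show ?case
  proof (cases "b = m")
    case True
    then have "i < a" using Suc.prems by auto
    have "P m a b n (Suc k) {i..m} = P m (a-1) b n' k {i..m}"
      using P_rec[of a b m n' k "{i..m}"] Suc.prems True a1 n by simp
    also have "\<dots> = T (m-b) (a-i)" using Suc.prems n True \<open>i < a\<close> by (simp add: Suc.IH)
    finally show ?thesis .
  next
    case False
    then have bm: "b < m" using Suc.prems by auto
    then obtain l where l: "m - b = Suc l" by (cases "m - b") auto
    have "P m a (b+1) n' k {i..m} = T (m-(b+1)) (a-i)"
      by (rule Suc.IH) (use Suc.prems n l bm in auto)
    moreover have "m - (b+1) = l" using l by arith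
    ultimately have right: "P m a (b+1) n' k {i..m} = T l (a-i)" by simp
    have left: "P m (a-1) b n' k {i..m} = (if a = i then 0 else T (Suc l) (a-i-1))"
    proof (cases "a = i")
      case True then show ?thesis using Suc.prems assms by (auto intro!: P_zero)
    next
      case False
      have "P m (a-1) b n' k {i..m} = T (m-b) (a-1-i)"
        by (rule Suc.IH) (use Suc.prems n a1 False in auto)
      moreover have "a-1-i = a-i-1" by arith
      ultimately show ?thesis using False l by simp
    qed
    have "P m a b n (Suc k) {i..m} = (P m (a-1) b n' k {i..m} + P m a (b+1) n' k {i..m})/2"
      using P_rec[of a b m n' k "{i..m}"] Suc.prems a1 bm n by simp
    also have "\<dots> = T (m-b) (a-i)"
    proof (cases "a = i")
      case True then show ?thesis using left right l by simp
    next
      case False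
      then obtain r where r: "a - i = Suc r" using Suc.prems by (cases "a - i") auto
      then show ?thesis using left right l False by simp
    qed
    finally show ?thesis .
  qed
qed

lemma P_D:
  shows "1 \<le> a \<Longrightarrow> a \<le> b \<Longrightarrow> b \<le> m \<Longrightarrow> k = (a-1)+(m-b) \<Longrightarrow> k \<le> n
    \<Longrightarrow> P m a b n k {1..m} = 1"
proof (induction k arbitrary: a b n)
  case 0
  then show ?case by (simp add: P_base)
next
  case (Suc k)
  obtain n' where n: "n = Suc n'" using Suc.prems by (cases n) auto
  have L: "1 < a \<Longrightarrow> P m (a-1) b n' k {1..m} = 1" by (rule Suc.IH) (use Suc.prems n in auto)
  have R: "b < m \<Longrightarrow> P m a (b+1) n' k {1..m} = 1" by (rule Suc.IH) (use Suc.prems n in auto)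
  have "\<not> (a = 1 \<and> b = m)" using Suc.prems by auto
  then show ?case using P_rec[of a b m n' k "{1..m}"] Suc.prems n L R by auto
qed

lemma T_sum: "(\<Sum>l\<le>n. T l (n-l)) = (real n + 2) / 2"
proof (induction n)
  case 0
  then show ?case by simp
next
  case (Suc n)
  have A: "(\<Sum>l\<le>Suc n. T l (Suc n - l)) = 1 + (\<Sum>l<n. T (Suc l) (n - l)) + T (Suc n) 0"
  proof -
    have "(\<Sum>l\<le>Suc n. T l (Suc n - l)) = T 0 (Suc n) + (\<Sum>l\<le>n. T (Suc l) (n - l))"
      by (subst sum.atMost_Suc_shift) simp
    also have "(\<Sum>l\<le>n. T (Suc l) (n - l)) = (\<Sum>l<n. T (Suc l) (n - l)) + T (Suc n) 0"
      by (simp add: lessThan_Suc_atMost[symmetric])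
    finally show ?thesis by simp
  qed
  have B: "(\<Sum>l<n. T (Suc l) (n - l)) = ((\<Sum>l<n. T l (n - l)) + (\<Sum>l<n. T (Suc l) (n - Suc l))) / 2"
  proof -
    have "(\<Sum>l<n. T (Suc l) (n - l)) = (\<Sum>l<n. (T l (n - l) + T (Suc l) (n - Suc l)) / 2)"
    proof (rule sum.cong)
      fix l assume "l \<in> {..<n}"
      then obtain r where "n - l = Suc r" "n - Suc l = r" by (metis Suc_diff_Suc lessThan_iff)
      then show "T (Suc l) (n - l) = (T l (n - l) + T (Suc l) (n - Suc l)) / 2" by simp
    qed simp
    then show ?thesis by (simp only: sum.distrib[symmetric] sum_divide_distrib[symmetric])
  qed
  have C: "(\<Sum>l<n. T l (n - l)) = (\<Sum>l\<le>n. T l (n-l)) - T n 0"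
    by (simp add: lessThan_Suc_atMost[symmetric])
  have D: "(\<Sum>l<n. T (Suc l) (n - Suc l)) = (\<Sum>l\<le>n. T l (n-l)) - 1"
    by (simp add: sum.atMost_shift)
  have E: "T (Suc n) 0 = T n 0 / 2" by simp
  show ?case unfolding A B C D E Suc.IH by (simp add: field_simps)
qed


lemma L0:
  assumes "1 \<le> m" "i \<le> j"
  shows "top_interval_prob m i j = (\<Sum>c\<in>{1..m}. P m c c (m-1) (j-i) {i..j}) / m"
proof -
  have "top_interval_prob m i j = (\<Sum>c\<in>{1..m}. measure_pmf.prob (map_pmf (Cons c) (conitzer_ext m c c (m - 1)))
       {v. set (take (j - i + 1) v) = {i..j}}) / card {1..m}"
    unfolding top_interval_prob_def conitzer_def using assms by (subst prob_bind_pmf_of_set) auto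
  also have "\<dots> = (\<Sum>c\<in>{1..m}. P m c c (m-1) (j-i) {i..j}) / m"
    by (simp add: measure_map_pmf P_def)
  finally show ?thesis .
qed

lemma restrict_sum:
  assumes "1 \<le> i" "j \<le> m"
  shows "(\<Sum>c\<in>{1..m}. P m c c n k {i..j}) = (\<Sum>c\<in>{i..j}. P m c c n k {i..j})"
  by (rule sum.mono_neutral_right) (use assms in \<open>auto intro!: P_zero\<close>)

theorem proposition1:
  fixes m :: nat
  assumes "m \<ge> 1"
  shows "(\<forall>l\<in>{1..m}. top_interval_prob m l l = 1 / real m)
    \<and> top_interval_prob m 1 m = 1
    \<and> (\<forall>i j. 1 < i \<and> i \<le> j \<and> j < m \<longrightarrow>
          top_interval_prob m i j = 1 / real m
        \<and> top_interval_prob m 1 i = real (i + 1) / (2 * real m)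
        \<and> top_interval_prob m j m = real (m - j + 2) / (2 * real m))"
proof (intro conjI allI impI ballI)
  fix l assume l: "l \<in> {1..m}"
  have "top_interval_prob m l l = (\<Sum>c\<in>{l..l}. P m c c (m-1) 0 {l..l}) / m"
    using L0[OF assms, of l l] restrict_sum[of l l m "m-1" 0] l by simp
  also have "\<dots> = 1 / m" by (simp add: P_base)
  finally show "top_interval_prob m l l = 1 / real m" .
next
  have one: "P m c c (m-1) (m-1) {1..m} = 1" if "c \<in> {1..m}" for c
    by (rule P_D) (use that in auto)
  have "top_interval_prob m 1 m = (\<Sum>c\<in>{1..m}. 1) / m"
    using L0[OF assms, of 1 m] assms one by simp
  then show "top_interval_prob m 1 m = 1" using assms by simp
next
  fix i j assume ij: "1 < i \<and> i \<le> j \<and> j < m"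
  have pa: "P m c c (m-1) (j-i) {i..j} = real ((j-i) choose (c-i)) / 2^(j-i)" if "c \<in> {i..j}" for c
    by (rule P_A) (use that ij in auto)
  have pb: "P m c c (m-1) (i-1) {1..i} = T (c-1) (i-c)" if "c \<in> {1..i}" for c
    by (rule P_B) (use that ij in auto)
  have pc: "P m c c (m-1) (m-j) {j..m} = T (m-c) (c-j)" if "c \<in> {j..m}" for c
    by (rule P_C) (use that ij in auto)
  {
    have "top_interval_prob m i j = (\<Sum>c\<in>{i..j}. real ((j-i) choose (c-i)) / 2^(j-i)) / m"
      using L0[OF assms, of i j] restrict_sum[of i j m "m-1" "j-i"] ij
        sum.cong[OF refl pa, of "{i..j}"]
      by simp
    also have "(\<Sum>c\<in>{i..j}. real ((j-i) choose (c-i)) / 2^(j-i)) = (\<Sum>l\<le>j-i. real ((j-i) choose l) / 2^(j-i))"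
      by (rule sum.reindex_bij_witness[where i="\<lambda>l. l+i" and j="\<lambda>c. c-i"]) (use ij in auto)
    also have "\<dots> = real (\<Sum>l\<le>j-i. (j-i) choose l) / 2^(j-i)"
      by (simp add: sum_divide_distrib)
    also have "\<dots> = 1" by (simp add: choose_row_sum)
    finally show "top_interval_prob m i j = 1 / real m" by simp
  }
  {
    have "top_interval_prob m 1 i = (\<Sum>c\<in>{1..i}. T (c-1) (i-c)) / m"
      using L0[OF assms, of 1 i] restrict_sum[of 1 i m "m-1" "i-1"] ij
        sum.cong[OF refl pb, of "{1..i}"]
      by simp
    also have "(\<Sum>c\<in>{1..i}. T (c-1) (i-c)) = (\<Sum>l\<le>i-1. T l (i-1-l))"
      by (rule sum.reindex_bij_witness[where i="\<lambda>l. l+1" and j="\<lambda>c. c-1"]) (use ij in auto)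
    also have "\<dots> = (real (i-1) + 2) / 2" by (rule T_sum)
    also have "\<dots> = real (i+1) / 2" using ij by (simp add: of_nat_diff)
    finally show "top_interval_prob m 1 i = real (i + 1) / (2 * real m)" by simp
  }
  {
    have "top_interval_prob m j m = (\<Sum>c\<in>{j..m}. T (m-c) (c-j)) / m"
      using L0[OF assms, of j m] restrict_sum[of j m m "m-1" "m-j"] ij
        sum.cong[OF refl pc, of "{j..m}"]
      by simp
    also have "(\<Sum>c\<in>{j..m}. T (m-c) (c-j)) = (\<Sum>l\<le>m-j. T l (m-j-l))"
      by (rule sum.reindex_bij_witness[where i="\<lambda>l. m-l" and j="\<lambda>c. m-c"]) (use ij in auto)
    also have "\<dots> = (real (m-j) + 2) / 2" by (rule T_sum)
    also have "\<dots> = real (m-j+2) / 2" using ij by simp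
    finally show "top_interval_prob m j m = real (m - j + 2) / (2 * real m)" by simp
  }
qed

end
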